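(* Let $Q$ be a non-trivial free abelian pro-$p$ group of finite rank and let $Y$ be the set of all epimorphisms of pro-$p$ groups $\varphi:Q\to Q_1$, where $Q_1\cong\mathbb{Z}_p$. For $\varphi\in Y$ let $\hat\varphi:\mathbb{F}_p[[Q]]\to\mathbb{F}_p[[Q_1]]$ be the continuous ring homomorphism induced by $\varphi$. Then $\bigcap_{\varphi\in Y}\ker(\hat\varphi)=0$.
   Context: $\mathbb{F}_p[[Q]]$ denotes the completed group algebra of the pro-$p$ group $Q$ over $\mathbb{F}_p$. *)

theory Defs
  imports "HOL-Analysis.Analysis"
begin

text \<open>Concrete model: Q = Z_p^n (n >= 1), written as the inverse limit of the finite
quotients Q/Q^(p^k) = (Z/p^k)^n.\<close>

definition lvl :: "int \<Rightarrow> nat \<Rightarrow> nat \<Rightarrow> (nat \<Rightarrow> int) set" where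
  "lvl p n k = {x. (\<forall>i<n. 0 \<le> x i \<and> x i < p ^ k) \<and> (\<forall>i\<ge>n. x i = 0)}"

definition red :: "int \<Rightarrow> nat \<Rightarrow> (nat \<Rightarrow> int) \<Rightarrow> (nat \<Rightarrow> int)" where
  "red p k x = (\<lambda>i. x i mod p ^ k)"

text \<open>Completed group algebra F_p[[Z_p^n]] = inverse limit over k of the group algebras
F_p[(Z/p^k)^n]; an element is a compatible family of coefficient functions f k with values
in F_p = {0..<p}, compatibility being given by the maps induced by the reductions.\<close>
definition fpQ :: "int \<Rightarrow> nat \<Rightarrow> (nat \<Rightarrow> (nat \<Rightarrow> int) \<Rightarrow> int) set" where
  "fpQ p n = {f. \<forall>k.
      (\<forall>x. x \<notin> lvl p n k \<longrightarrow> f k x = 0) \<and>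
      (\<forall>x\<in>lvl p n k. 0 \<le> f k x \<and> f k x < p) \<and>
      (\<forall>y\<in>lvl p n k.
         f k y = (\<Sum>x\<in>{x\<in>lvl p n (Suc k). red p k x = y}. f (Suc k) x) mod p)}"

text \<open>Continuous epimorphisms Z_p^n -> Z_p, given as compatible families of surjective
group homomorphisms phi k : (Z/p^k)^n -> Z/p^k (Z/p^k represented by {0..<p^k}).\<close>
definition epis :: "int \<Rightarrow> nat \<Rightarrow> (nat \<Rightarrow> (nat \<Rightarrow> int) \<Rightarrow> int) set" where
  "epis p n = {\<phi>. \<forall>k.
      (\<forall>x. x \<notin> lvl p n k \<longrightarrow> \<phi> k x = 0) \<and>
      (\<forall>x\<in>lvl p n k. \<forall>y\<in>lvl p n k.
          \<phi> k (red p k (\<lambda>i. x i + y i)) = (\<phi> k x + \<phi> k y) mod p ^ k) \<and>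
      \<phi> k ` lvl p n k = {0..<p ^ k} \<and>
      (\<forall>x\<in>lvl p n (Suc k). \<phi> k (red p k x) = \<phi> (Suc k) x mod p ^ k)}"

text \<open>Induced continuous ring homomorphism F_p[[Z_p^n]] -> F_p[[Z_p]]: at level k it is
the linear extension of phi k on group algebras.\<close>
definition hat :: "int \<Rightarrow> nat \<Rightarrow> (nat \<Rightarrow> (nat \<Rightarrow> int) \<Rightarrow> int)
    \<Rightarrow> (nat \<Rightarrow> (nat \<Rightarrow> int) \<Rightarrow> int) \<Rightarrow> (nat \<Rightarrow> int \<Rightarrow> int)" where
  "hat p n \<phi> f = (\<lambda>k y. if y \<in> {0..<p ^ k}
       then (\<Sum>x\<in>{x\<in>lvl p n k. \<phi> k x = y}. f k x) mod p else 0)"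

definition ker_hat :: "int \<Rightarrow> nat \<Rightarrow> (nat \<Rightarrow> (nat \<Rightarrow> int) \<Rightarrow> int)
    \<Rightarrow> (nat \<Rightarrow> (nat \<Rightarrow> int) \<Rightarrow> int) set" where
  "ker_hat p n \<phi> = {f \<in> fpQ p n. hat p n \<phi> f = (\<lambda>k y. 0)}"

end

theory Submission
  imports Defs "HOL-Number_Theory.Cong"
begin

lemma dv:
  assumes p: "prime (p::nat)" and j: "0 < j" and nd: "\<not> p^m dvd j"
  shows "p dvd (p^m*t choose j)"
proof (cases "t = 0")
  case True thus ?thesis using j by (simp add: binomial_eq_0)
next
  case False
  define N where "N = p^m*t"
  have "p^m > 0" using p by (simp add: prime_gt_0_nat)
  hence N0: "N \<ge> 1" using False N_def by (metis less_one mult_eq_0_iff not_le zero_less_iff_neq_zero)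
  have "Suc (N-1) * ((N-1) choose (j-1)) = (Suc (N-1) choose Suc (j-1)) * Suc (j-1)"
    by (rule Suc_times_binomial_eq)
  hence eq: "N * ((N-1) choose (j-1)) = (N choose j) * j" using N0 j by simp
  have "p^m dvd N * ((N-1) choose (j-1))" unfolding N_def mult.assoc by (rule dvd_triv_left)
  hence "p^m dvd (N choose j) * j" unfolding eq .
  show ?thesis
  proof (rule ccontr)
    assume "\<not> p dvd (p^m*t choose j)"
    hence "coprime p (N choose j)" using p N_def by (simp add: prime_imp_coprime)
    hence "coprime (p^m) (N choose j)" by simp
    hence "p^m dvd j" using \<open>p^m dvd (N choose j) * j\<close> by (simp add: coprime_dvd_mult_right_iff)
    thus False using nd by simp
  qed
qed

lemma B2:
  assumes p: "prime (p::nat)" and j: "j < p^m"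
  shows "[a + p^m*t choose j = a choose j] (mod p)"
proof -
  have "(a + p^m*t choose j) = (\<Sum>k\<le>j. (a choose k) * (p^m*t choose (j - k)))"
    by (rule vandermonde[symmetric])
  also have "[\<dots> = (\<Sum>k\<le>j. if k = j then a choose k else 0)] (mod p)"
  proof (rule cong_sum)
    fix k assume k: "k \<in> {..j}"
    show "[(a choose k) * (p^m*t choose (j - k)) = (if k = j then a choose k else 0)] (mod p)"
    proof (cases "k = j")
      case True thus ?thesis by simp
    next
      case False
      hence "0 < j - k" "j - k < p^m" using k j by auto
      hence "\<not> p^m dvd (j-k)" by (meson nat_dvd_not_less)
      hence "p dvd (p^m*t choose (j - k))" using dv[OF p \<open>0 < j - k\<close>] by blast
      thus ?thesis using False by (simp add: cong_0_iff)
    qed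
  qed
  also have "(\<Sum>k\<le>j. if k = j then a choose k else 0) = a choose j" by simp
  finally show ?thesis .
qed

lemma B3a:
  assumes p: "prime (p::nat)"
  shows "[p^m*x choose (p^m*g) = x choose g] (mod p)"
proof (induction x arbitrary: g)
  case 0
  have "p^m > 0" using p by (simp add: prime_gt_0_nat)
  thus ?case by (cases g) (auto simp: binomial_eq_0)
next
  case (Suc x)
  define q where "q = p^m"
  have q0: "q > 0" using p q_def by (simp add: prime_gt_0_nat)
  have e1: "(q * Suc x choose (q*g)) = (\<Sum>k\<le>q*g. (q*x choose k) * (q choose (q*g - k)))"
  proof -
    have "q * Suc x = q*x + q" by simp
    thus ?thesis using vandermonde[of "q*x" q "q*g"] by (simp only:)
  qed
  have c2: "[(\<Sum>k\<le>q*g. (q*x choose k) * (q choose (q*g - k))) = (\<Sum>k\<le>q*g. (if k = q*g then q*x choose k else 0)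
        + (if k + q = q*g then q*x choose k else 0))] (mod p)"
  proof (rule cong_sum)
    fix k assume k: "k \<in> {..q*g}"
    show "[(q*x choose k) * (q choose (q*g - k)) = (if k = q*g then q*x choose k else 0)
        + (if k + q = q*g then q*x choose k else 0)] (mod p)"
    proof (cases "k = q*g")
      case True thus ?thesis using q0 by simp
    next
      case F1: False
      show ?thesis
      proof (cases "k + q = q*g")
        case True
        hence "q*g - k = q" by simp
        thus ?thesis using F1 True by simp
      next
        case F2: False
        have r0: "0 < q*g - k" using k F1 by auto
        show ?thesis
        proof (cases "q*g - k < q")
          case True
          hence "\<not> q dvd (q*g-k)" using r0 by (meson nat_dvd_not_less)
          hence "p dvd (q*1 choose (q*g - k))" using dv[OF p r0] q_def by blast
          thus ?thesis using F1 F2 by (simp add: cong_0_iff)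
        next
          case False
          hence "q*g - k > q" using F2 k by auto
          hence z: "(q choose (q*g - k)) = 0" by (rule binomial_eq_0)
          have e: "(if k = q*g then q*x choose k else 0) + (if k + q = q*g then q*x choose k else 0) = 0"
            by (simp only: if_not_P[OF F1] if_not_P[OF F2] add_0)
          show ?thesis by (simp only: z e mult_0_right cong_refl)
        qed
      qed
    qed
  qed
  have e3: "(\<Sum>k\<le>q*g. (if k = q*g then q*x choose k else 0)
        + (if k + q = q*g then q*x choose k else 0))
      = (q*x choose (q*g)) + (if g \<ge> 1 then q*x choose (q*(g-1)) else 0)"
  proof -
    have 1: "(\<Sum>k\<le>q*g. (if k = q*g then q*x choose k else 0)) = q*x choose (q*g)" by simp
    have 2: "(\<Sum>k\<le>q*g. (if k + q = q*g then q*x choose k else 0))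
        = (\<Sum>k\<le>q*g. (if k = q*(g-1) \<and> g \<ge> 1 then q*x choose k else 0))"
    proof (rule sum.cong)
      fix k assume "k \<in> {..q*g}"
      have "k + q = q*g \<longleftrightarrow> (k = q*(g-1) \<and> g \<ge> 1)"
        using q0 by (cases g) auto
      thus "(if k + q = q*g then q*x choose k else 0) = (if k = q*(g-1) \<and> g \<ge> 1 then q*x choose k else 0)"
        by simp
    qed simp
    have 3: "(\<Sum>k\<le>q*g. (if k = q*(g-1) \<and> g \<ge> 1 then q*x choose k else 0))
       = (if g \<ge> 1 then q*x choose (q*(g-1)) else 0)"
    proof (cases "g \<ge> 1")
      case True thus ?thesis by (simp add: sum.delta)
    next
      case False thus ?thesis by simp
    qed
    show ?thesis unfolding sum.distrib 1 2 3 ..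
  qed
  have c4: "[(q*x choose (q*g)) + (if g \<ge> 1 then q*x choose (q*(g-1)) else 0) = (x choose g) + (if g \<ge> 1 then x choose (g-1) else 0)] (mod p)"
  proof (cases "g \<ge> 1")
    case True thus ?thesis using Suc.IH[of g] Suc.IH[of "g-1"] q_def by (simp add: cong_add)
  next
    case False thus ?thesis using Suc.IH[of g] q_def by simp
  qed
  have e5: "(x choose g) + (if g \<ge> 1 then x choose (g-1) else 0) = Suc x choose g"
    by (cases g) auto
  have "[q * Suc x choose (q*g) = Suc x choose g] (mod p)"
    using cong_trans[OF c2[unfolded e3] c4] unfolding e1 e5 .
  thus ?case unfolding q_def .
qed

lemma B3:
  assumes p: "prime (p::nat)"
  shows "[p^e*a choose j = (if p^e dvd j then a choose (j div p^e) else 0)] (mod p)"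
proof (cases "p^e dvd j")
  case True
  then obtain g where "j = p^e*g" by blast
  thus ?thesis using B3a[OF p] p by (simp add: prime_gt_0_nat)
next
  case False
  hence "j > 0" by (metis dvd_0_right gr0I)
  thus ?thesis using dv[OF p \<open>j>0\<close> False] False by (simp add: cong_0_iff)
qed

definition Tset :: "nat \<Rightarrow> (nat\<Rightarrow>nat) \<Rightarrow> nat \<Rightarrow> nat \<Rightarrow> (nat\<Rightarrow>nat) set" where
 "Tset p e n N = {\<gamma>. (\<forall>i\<ge>n. \<gamma> i = 0) \<and> (\<Sum>i<n. \<gamma> i * p^(e i)) = N}"

lemma Tset_finite:
  assumes "p > 0"
  shows "finite (Tset p e n N)"
proof -
  have "Tset p e n N \<subseteq> {\<gamma>. \<forall>i. (i \<in> {..<n} \<longrightarrow> \<gamma> i \<in> {..N}) \<and> (i \<notin> {..<n} \<longrightarrow> \<gamma> i = 0)}"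
  proof
    fix \<gamma> assume g: "\<gamma> \<in> Tset p e n N"
    have "\<gamma> i \<le> N" if "i < n" for i
    proof -
      have "\<gamma> i \<le> \<gamma> i * p^(e i)" using assms by simp
      also have "\<dots> \<le> (\<Sum>i<n. \<gamma> i * p^(e i))"
        by (rule member_le_sum) (use that in auto)
      finally show ?thesis using g by (simp add: Tset_def)
    qed
    thus "\<gamma> \<in> {\<gamma>. \<forall>i. (i \<in> {..<n} \<longrightarrow> \<gamma> i \<in> {..N}) \<and> (i \<notin> {..<n} \<longrightarrow> \<gamma> i = 0)}"
      using g by (auto simp: Tset_def)
  qed
  moreover have "finite {\<gamma>. \<forall>i. (i \<in> {..<n} \<longrightarrow> \<gamma> i \<in> {..N}) \<and> (i \<notin> {..<n} \<longrightarrow> \<gamma> i = 0)}"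
    by (rule finite_set_of_finite_funs) auto
  ultimately show ?thesis by (rule finite_subset)
qed

lemma Tset_0: "Tset p e 0 N = (if N = 0 then {\<lambda>_. 0} else {})"
  by (auto simp: Tset_def)

lemma inner:
  assumes p0: "p > 0" and jN: "j \<le> N"
  shows "(\<Sum>\<gamma>\<in>{\<gamma>\<in>Tset p e (Suc n) N. p^(e n) * \<gamma> n = j}. (a n choose \<gamma> n) * (\<Prod>i<n. a i choose \<gamma> i))
     = (if p^(e n) dvd j then (a n choose (j div p^(e n))) * (\<Sum>\<delta>\<in>Tset p e n (N-j). \<Prod>i<n. a i choose \<delta> i) else 0)"
proof (cases "p^(e n) dvd j")
  case False
  hence e: "{\<gamma>\<in>Tset p e (Suc n) N. p^(e n) * \<gamma> n = j} = {}" by auto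
  show ?thesis unfolding e using False by simp
next
  case True
  define w where "w = p^(e n)"
  have w0: "w > 0" using p0 w_def by simp
  have wj: "w * (j div w) = j" using True w_def by simp
  have "(\<Sum>\<gamma>\<in>{\<gamma>\<in>Tset p e (Suc n) N. w * \<gamma> n = j}. (a n choose \<gamma> n) * (\<Prod>i<n. a i choose \<gamma> i))
      = (\<Sum>\<delta>\<in>Tset p e n (N-j). (a n choose (j div w)) * (\<Prod>i<n. a i choose \<delta> i))"
  proof (rule sum.reindex_bij_witness[where j = "\<lambda>\<gamma>. \<gamma>(n:=0)" and i = "\<lambda>\<delta>. \<delta>(n := j div w)"])
    fix \<gamma> assume g: "\<gamma> \<in> {\<gamma>\<in>Tset p e (Suc n) N. w * \<gamma> n = j}"
    hence gn: "\<gamma> n = j div w" using w0 by auto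
    show "(\<gamma>(n:=0))(n := j div w) = \<gamma>" using gn by auto
    have s: "(\<Sum>i<Suc n. \<gamma> i * p^(e i)) = N" using g by (simp add: Tset_def)
    have "(\<Sum>i<n. (\<gamma>(n:=0)) i * p^(e i)) = (\<Sum>i<n. \<gamma> i * p^(e i))" by simp
    also have "\<dots> = N - j" using s g w_def by (simp add: algebra_simps)
    finally show "\<gamma>(n:=0) \<in> Tset p e n (N-j)" using g by (auto simp: Tset_def)
    show "(a n choose (j div w)) * (\<Prod>i<n. a i choose (\<gamma>(n:=0)) i) = (a n choose \<gamma> n) * (\<Prod>i<n. a i choose \<gamma> i)"
      using gn by simp
  next
    fix \<delta> assume d: "\<delta> \<in> Tset p e n (N-j)"
    show "(\<delta>(n := j div w))(n:=0) = \<delta>" using d by (auto simp: Tset_def)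
    have s: "(\<Sum>i<n. \<delta> i * p^(e i)) = N - j" using d by (simp add: Tset_def)
    have "(\<Sum>i<Suc n. (\<delta>(n := j div w)) i * p^(e i)) = (\<Sum>i<n. \<delta> i * p^(e i)) + (j div w) * w"
      using w_def by simp
    also have "\<dots> = N" using s wj jN by (simp add: algebra_simps)
    finally show "\<delta>(n := j div w) \<in> {\<gamma>\<in>Tset p e (Suc n) N. w * \<gamma> n = j}"
      using d wj by (auto simp: Tset_def)
  qed
  thus ?thesis using True w_def by (simp add: sum_distrib_left)
qed

lemma G:
  assumes p: "prime (p::nat)"
  shows "[(\<Sum>i<n. p^(e i) * a i) choose N = (\<Sum>\<gamma>\<in>Tset p e n N. \<Prod>i<n. a i choose \<gamma> i)] (mod p)"
proof (induction n arbitrary: N)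
  case 0
  show ?case by (simp add: Tset_0 binomial_eq_0)
next
  case (Suc n)
  have p0: "p > 0" using p by (simp add: prime_gt_0_nat)
  define A where "A = (\<Sum>i<n. p^(e i) * a i)"
  define w where "w = p^(e n)"
  have e1: "(\<Sum>i<Suc n. p^(e i) * a i) choose N = (\<Sum>j\<le>N. (w * a n choose j) * (A choose (N - j)))"
    using vandermonde[of "w * a n" A N] by (simp add: A_def w_def add.commute)
  have c2: "[(\<Sum>j\<le>N. (w * a n choose j) * (A choose (N - j)))
     = (\<Sum>j\<le>N. (if w dvd j then (a n choose (j div w)) * (\<Sum>\<delta>\<in>Tset p e n (N-j). \<Prod>i<n. a i choose \<delta> i) else 0))] (mod p)"
  proof (rule cong_sum)
    fix j assume "j \<in> {..N}"
    have "[(w * a n choose j) * (A choose (N - j)) = (if w dvd j then a n choose (j div w) else 0) * (\<Sum>\<delta>\<in>Tset p e n (N-j). \<Prod>i<n. a i choose \<delta> i)] (mod p)"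
      unfolding A_def w_def by (rule cong_mult[OF B3[OF p, of "e n" "a n" j] Suc.IH[of "N-j"]])
    thus "[(w * a n choose j) * (A choose (N - j)) = (if w dvd j then (a n choose (j div w)) * (\<Sum>\<delta>\<in>Tset p e n (N-j). \<Prod>i<n. a i choose \<delta> i) else 0)] (mod p)"
      by (cases "w dvd j") simp_all
  qed
  have e3: "(\<Sum>\<gamma>\<in>Tset p e (Suc n) N. \<Prod>i<Suc n. a i choose \<gamma> i)
      = (\<Sum>j\<le>N. (if w dvd j then (a n choose (j div w)) * (\<Sum>\<delta>\<in>Tset p e n (N-j). \<Prod>i<n. a i choose \<delta> i) else 0))"
  proof -
    have "(\<Sum>\<gamma>\<in>Tset p e (Suc n) N. \<Prod>i<Suc n. a i choose \<gamma> i)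
        = (\<Sum>\<gamma>\<in>Tset p e (Suc n) N. (a n choose \<gamma> n) * (\<Prod>i<n. a i choose \<gamma> i))"
      by (simp add: mult.commute)
    also have "\<dots> = (\<Sum>j\<le>N. \<Sum>\<gamma>\<in>{\<gamma>\<in>Tset p e (Suc n) N. w * \<gamma> n = j}. (a n choose \<gamma> n) * (\<Prod>i<n. a i choose \<gamma> i))"
    proof (rule sum.group[symmetric])
      show "finite (Tset p e (Suc n) N)" using Tset_finite p0 by blast
      show "finite {..N}" by simp
      show "(\<lambda>\<gamma>. w * \<gamma> n) ` Tset p e (Suc n) N \<subseteq> {..N}"
      proof
        fix y assume "y \<in> (\<lambda>\<gamma>. w * \<gamma> n) ` Tset p e (Suc n) N"
        then obtain \<gamma> where g: "\<gamma> \<in> Tset p e (Suc n) N" and y: "y = w * \<gamma> n" by blast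
        have "w * \<gamma> n \<le> (\<Sum>i<Suc n. \<gamma> i * p^(e i))" using w_def by (simp add: mult.commute)
        thus "y \<in> {..N}" using g y by (simp add: Tset_def)
      qed
    qed
    also have "\<dots> = (\<Sum>j\<le>N. (if w dvd j then (a n choose (j div w)) * (\<Sum>\<delta>\<in>Tset p e n (N-j). \<Prod>i<n. a i choose \<delta> i) else 0))"
      by (rule sum.cong) (use inner[OF p0] w_def in auto)
    finally show ?thesis .
  qed
  show ?case using c2 unfolding e1 e3[symmetric] .
qed

lemma lvl_finite: "finite (lvl p n k)"
proof -
  have "lvl p n k \<subseteq> {x. \<forall>i. (i \<in> {..<n} \<longrightarrow> x i \<in> {0..<p^k}) \<and> (i \<notin> {..<n} \<longrightarrow> x i = 0)}"
    unfolding lvl_def by auto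
  moreover have "finite {x. \<forall>i. (i \<in> {..<n} \<longrightarrow> x i \<in> {0..<p^k}) \<and> (i \<notin> {..<n} \<longrightarrow> x i = (0::int))}"
    by (rule finite_set_of_finite_funs) auto
  ultimately show ?thesis by (rule finite_subset)
qed

lemma red_lvl:
  assumes "p > 0" "x \<in> lvl p n k'" shows "red p k x \<in> lvl p n k"
  using assms by (auto simp: lvl_def red_def)

lemma red_lvl2:
  assumes "p > 0" "\<forall>i\<ge>n. x i = 0" shows "red p k x \<in> lvl p n k"
  using assms by (auto simp: lvl_def red_def)

definition phiM :: "int \<Rightarrow> nat \<Rightarrow> nat \<Rightarrow> nat \<Rightarrow> (nat \<Rightarrow> int) \<Rightarrow> int" where
  "phiM p n M k x = (if x \<in> lvl p n k then (\<Sum>i<n. p^(M*i) * x i) mod p^k else 0)"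

lemma sum_mod_cong:
  fixes p :: int
  shows "(\<Sum>i<n. p^(M*i) * (x i mod p^k)) mod p^k = (\<Sum>i<n. p^(M*i) * x i) mod p^k"
proof -
  have "[(\<Sum>i<n. p^(M*i) * (x i mod p^k)) = (\<Sum>i<n. p^(M*i) * x i)] (mod p^k)"
    by (intro cong_sum cong_mult cong_refl) (simp add: cong_def)
  thus ?thesis by (simp add: cong_def)
qed

lemma phiM_epis:
  assumes p: "prime p" and n: "n \<ge> 1"
  shows "phiM p n M \<in> epis p n"
proof -
  have p0: "p > 0" using p by (simp add: prime_gt_0_int)
  show ?thesis unfolding epis_def
  proof (rule CollectI, rule allI, intro conjI)
    fix k
    show "\<forall>x. x \<notin> lvl p n k \<longrightarrow> phiM p n M k x = 0" by (simp add: phiM_def)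
    show "\<forall>x\<in>lvl p n k. \<forall>y\<in>lvl p n k.
          phiM p n M k (red p k (\<lambda>i. x i + y i)) = (phiM p n M k x + phiM p n M k y) mod p ^ k"
    proof (intro ballI)
      fix x y assume x: "x \<in> lvl p n k" and y: "y \<in> lvl p n k"
      have r: "red p k (\<lambda>i. x i + y i) \<in> lvl p n k"
        using x y p0 by (intro red_lvl2) (auto simp: lvl_def)
      have "phiM p n M k (red p k (\<lambda>i. x i + y i)) = (\<Sum>i<n. p^(M*i) * ((x i + y i) mod p^k)) mod p^k"
        using r by (simp add: phiM_def red_def)
      also have "\<dots> = (\<Sum>i<n. p^(M*i) * (x i + y i)) mod p^k" by (rule sum_mod_cong)
      also have "\<dots> = ((\<Sum>i<n. p^(M*i) * x i) + (\<Sum>i<n. p^(M*i) * y i)) mod p^k"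
        by (simp add: distrib_left sum.distrib)
      also have "\<dots> = (phiM p n M k x + phiM p n M k y) mod p ^ k"
        using x y by (simp add: phiM_def mod_add_eq)
      finally show "phiM p n M k (red p k (\<lambda>i. x i + y i)) = (phiM p n M k x + phiM p n M k y) mod p ^ k" .
    qed
    show "phiM p n M k ` lvl p n k = {0..<p ^ k}"
    proof
      show "phiM p n M k ` lvl p n k \<subseteq> {0..<p ^ k}" using p0 by (auto simp: phiM_def)
      show "{0..<p ^ k} \<subseteq> phiM p n M k ` lvl p n k"
      proof
        fix v assume v: "v \<in> {0..<p^k}"
        define x where "x = (\<lambda>i::nat. if i = 0 then v else 0)"
        have xl: "x \<in> lvl p n k" using v n p0 by (auto simp: lvl_def x_def)
        have "(\<Sum>i<n. p^(M*i) * x i) = (\<Sum>i<n. if i = 0 then v else 0)"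
          by (rule sum.cong) (auto simp: x_def)
        also have "\<dots> = v" using n by (simp add: sum.delta)
        finally have "phiM p n M k x = v" using xl v by (simp add: phiM_def)
        thus "v \<in> phiM p n M k ` lvl p n k" using xl by force
      qed
    qed
    show "\<forall>x\<in>lvl p n (Suc k). phiM p n M k (red p k x) = phiM p n M (Suc k) x mod p ^ k"
    proof
      fix x assume x: "x \<in> lvl p n (Suc k)"
      have r: "red p k x \<in> lvl p n k" using red_lvl[OF p0 x] .
      have "phiM p n M k (red p k x) = (\<Sum>i<n. p^(M*i) * (x i mod p^k)) mod p^k"
        using r by (simp add: phiM_def red_def)
      also have "\<dots> = (\<Sum>i<n. p^(M*i) * x i) mod p^k" by (rule sum_mod_cong)
      also have "\<dots> = ((\<Sum>i<n. p^(M*i) * x i) mod p^(Suc k)) mod p^k"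
        by (simp add: mod_mod_cancel)
      also have "\<dots> = phiM p n M (Suc k) x mod p ^ k" using x by (simp add: phiM_def)
      finally show "phiM p n M k (red p k x) = phiM p n M (Suc k) x mod p ^ k" .
    qed
  qed
qed

lemma zero_in:
  assumes p: "prime p" and n: "n \<ge> 1" and "\<phi> \<in> epis p n"
  shows "(\<lambda>k x. 0) \<in> ker_hat p n \<phi>"
proof -
  have p0: "p > 0" using p by (simp add: prime_gt_0_int)
  show ?thesis using p0 by (auto simp: ker_hat_def fpQ_def hat_def fun_eq_iff)
qed

definition Bx :: "nat \<Rightarrow> (nat \<Rightarrow> nat) \<Rightarrow> (nat \<Rightarrow> int) \<Rightarrow> int" where
  "Bx n \<alpha> x = (\<Prod>i<n. int (nat (x i) choose \<alpha> i))"

definition cc :: "int \<Rightarrow> nat \<Rightarrow> (nat \<Rightarrow> (nat \<Rightarrow> int) \<Rightarrow> int) \<Rightarrow> nat \<Rightarrow> (nat \<Rightarrow> nat) \<Rightarrow> int" where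
  "cc p n f k \<alpha> = (\<Sum>x\<in>lvl p n k. f k x * Bx n \<alpha> x) mod p"

lemma Bred:
  assumes p: "prime p" and x: "\<forall>i<n. x i \<ge> 0" and a: "\<forall>i<n. \<alpha> i < nat p ^ k"
  shows "[Bx n \<alpha> (red p k x) = Bx n \<alpha> x] (mod p)"
  unfolding Bx_def
proof (rule cong_prod)
  fix i assume i: "i \<in> {..<n}"
  have p0: "p > 0" using p by (simp add: prime_gt_0_int)
  have P: "prime (nat p)" using p prime_int_nat_transfer[of p] by blast
  have pk: "p^k > 0" using p0 by simp
  have xi: "x i \<ge> 0" using x i by auto
  have dec: "x i = x i mod p^k + p^k * (x i div p^k)" by (rule mod_mult_div_eq[symmetric])
  have m0: "x i mod p^k \<ge> 0" using pk by simp
  have d0: "x i div p^k \<ge> 0" using pk xi by (simp add: div_int_pos_iff)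
  have "int (nat (x i mod p^k) + nat p ^ k * nat (x i div p^k)) = x i mod p^k + p^k * (x i div p^k)"
    using m0 d0 p0 by simp
  also have "\<dots> = x i" by (rule dec[symmetric])
  finally have "nat (x i) = nat (x i mod p^k) + nat p ^ k * nat (x i div p^k)" by (metis nat_int)
  hence "[nat (x i) choose \<alpha> i = nat (x i mod p^k) choose \<alpha> i] (mod nat p)"
    using B2[OF P, of "\<alpha> i" k "nat (x i mod p^k)" "nat (x i div p^k)"] a i by simp
  hence "[int (nat (x i) choose \<alpha> i) = int (nat (x i mod p^k) choose \<alpha> i)] (mod int (nat p))"
    by (rule cong_int_iff[THEN iffD2])
  moreover have pp: "int (nat p) = p" using p0 by simp
  ultimately have c: "[int (nat (x i) choose \<alpha> i) = int (nat (x i mod p^k) choose \<alpha> i)] (mod p)"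
    by simp
  have "[int (nat (x i mod p^k) choose \<alpha> i) = int (nat (x i) choose \<alpha> i)] (mod p)"
    using cong_sym[OF c] .
  thus "[int (nat (red p k x i) choose \<alpha> i) = int (nat (x i) choose \<alpha> i)] (mod p)"
    by (simp add: red_def)
qed

lemma compat:
  assumes p: "prime p" and f: "f \<in> fpQ p n" and a: "\<forall>i<n. \<alpha> i < nat p ^ k"
  shows "cc p n f (Suc k) \<alpha> = cc p n f k \<alpha>"
proof -
  have p0: "p > 0" using p by (simp add: prime_gt_0_int)
  let ?B = "Bx n \<alpha>"
  have c1: "[(\<Sum>y\<in>lvl p n k. f k y * ?B y) = (\<Sum>y\<in>lvl p n k. (\<Sum>x\<in>{x\<in>lvl p n (Suc k). red p k x = y}. f (Suc k) x) * ?B y)] (mod p)"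
  proof (rule cong_sum)
    fix y assume y: "y \<in> lvl p n k"
    have "f k y = (\<Sum>x\<in>{x\<in>lvl p n (Suc k). red p k x = y}. f (Suc k) x) mod p"
      using f y unfolding fpQ_def by blast
    hence "[f k y = (\<Sum>x\<in>{x\<in>lvl p n (Suc k). red p k x = y}. f (Suc k) x)] (mod p)"
      by (simp add: cong_def)
    thus "[f k y * ?B y = (\<Sum>x\<in>{x\<in>lvl p n (Suc k). red p k x = y}. f (Suc k) x) * ?B y] (mod p)"
      by (rule cong_mult) (rule cong_refl)
  qed
  have e2: "(\<Sum>y\<in>lvl p n k. (\<Sum>x\<in>{x\<in>lvl p n (Suc k). red p k x = y}. f (Suc k) x) * ?B y)
      = (\<Sum>y\<in>lvl p n k. (\<Sum>x\<in>{x\<in>lvl p n (Suc k). red p k x = y}. f (Suc k) x * ?B (red p k x)))"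
    by (rule sum.cong) (auto simp: sum_distrib_right)
  have e3: "\<dots> = (\<Sum>x\<in>lvl p n (Suc k). f (Suc k) x * ?B (red p k x))"
    by (rule sum.group) (use lvl_finite red_lvl[OF p0] in auto)
  have c4: "[(\<Sum>x\<in>lvl p n (Suc k). f (Suc k) x * ?B (red p k x)) = (\<Sum>x\<in>lvl p n (Suc k). f (Suc k) x * ?B x)] (mod p)"
  proof (rule cong_sum)
    fix x assume x: "x \<in> lvl p n (Suc k)"
    have "\<forall>i<n. x i \<ge> 0" using x by (simp add: lvl_def)
    thus "[f (Suc k) x * ?B (red p k x) = f (Suc k) x * ?B x] (mod p)"
      by (intro cong_mult cong_refl Bred[OF p _ a])
  qed
  have "[(\<Sum>y\<in>lvl p n k. f k y * ?B y) = (\<Sum>x\<in>lvl p n (Suc k). f (Suc k) x * ?B x)] (mod p)"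
    using cong_trans[OF c1[unfolded e2 e3] c4] .
  thus ?thesis unfolding cc_def by (simp add: cong_def)
qed

lemma stable:
  assumes p: "prime p" and f: "f \<in> fpQ p n" and a: "\<forall>i<n. \<alpha> i < nat p ^ k" and kk: "k \<le> k'"
  shows "cc p n f k' \<alpha> = cc p n f k \<alpha>"
  using kk
proof (induction k' rule: dec_induct)
  case base thus ?case by simp
next
  case (step m)
  have "nat 2 \<le> nat p" using prime_ge_2_int[OF p] by (rule nat_mono)
  hence P: "nat p \<ge> 1" by simp
  have "nat p ^ k \<le> nat p ^ m" using step(1) P by (simp add: power_increasing)
  hence "\<forall>i<n. \<alpha> i < nat p ^ m" using a by (meson less_le_trans)
  thus ?case using compat[OF p f] step(3) by simp
qed

lemma lt_pow: assumes "(P::nat) \<ge> 2" shows "m < P ^ m"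
proof -
  have "m < 2^m" by (rule less_exp)
  also have "\<dots> \<le> P^m" using assms by (simp add: power_mono)
  finally show ?thesis .
qed

definition cinf :: "int \<Rightarrow> nat \<Rightarrow> (nat \<Rightarrow> (nat \<Rightarrow> int) \<Rightarrow> int) \<Rightarrow> (nat \<Rightarrow> nat) \<Rightarrow> int" where
  "cinf p n f \<alpha> = cc p n f ((\<Sum>i<n. \<alpha> i) + 1) \<alpha>"

lemma cinf_eq:
  assumes p: "prime p" and f: "f \<in> fpQ p n" and a: "\<forall>i<n. \<alpha> i < nat p ^ k"
  shows "cc p n f k \<alpha> = cinf p n f \<alpha>"
proof -
  define k1 where "k1 = (\<Sum>i<n. \<alpha> i) + 1"
  have "nat 2 \<le> nat p" using prime_ge_2_int[OF p] by (rule nat_mono)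
  hence P: "nat p \<ge> 2" by simp
  have a1: "\<forall>i<n. \<alpha> i < nat p ^ k1"
  proof (intro allI impI)
    fix i assume "i < n"
    hence "\<alpha> i \<le> (\<Sum>i<n. \<alpha> i)" by (intro member_le_sum) auto
    also have "\<dots> < k1" unfolding k1_def by simp
    also have "\<dots> < nat p ^ k1" using lt_pow[OF P] .
    finally show "\<alpha> i < nat p ^ k1" .
  qed
  have e1: "cc p n f (max k k1) \<alpha> = cc p n f k \<alpha>" by (rule stable[OF p f a]) simp
  have e2: "cc p n f (max k k1) \<alpha> = cc p n f k1 \<alpha>" by (rule stable[OF p f a1]) simp
  have "cc p n f k \<alpha> = cc p n f k1 \<alpha>" using e1 e2 by (metis)
  thus ?thesis unfolding cinf_def k1_def[symmetric] .
qed

lemma lexmin: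
  fixes S :: "(nat \<Rightarrow> nat) set"
  assumes "S \<noteq> {}"
  shows "\<exists>a\<in>S. \<forall>b\<in>S. (\<exists>i<n. b i \<noteq> a i) \<longrightarrow> (\<exists>j<n. (\<forall>i. j<i \<and> i<n \<longrightarrow> b i = a i) \<and> a j < b j)"
  using assms
proof (induction n arbitrary: S)
  case 0 thus ?case by auto
next
  case (Suc n)
  define s where "s = (LEAST v. \<exists>a\<in>S. a n = v)"
  have ex: "\<exists>v. \<exists>a\<in>S. a n = v" using Suc.prems by auto
  have "\<exists>a\<in>S. a n = s" unfolding s_def by (rule LeastI_ex[OF ex])
  hence ne: "{a\<in>S. a n = s} \<noteq> {}" by auto
  from Suc.IH[OF ne] obtain a0 where a0: "a0 \<in> {a\<in>S. a n = s}"
    and H: "\<forall>b\<in>{a\<in>S. a n = s}. (\<exists>i<n. b i \<noteq> a0 i) \<longrightarrow> (\<exists>j<n. (\<forall>i. j<i \<and> i<n \<longrightarrow> b i = a0 i) \<and> a0 j < b j)"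
    by blast
  have a0n: "a0 n = s" using a0 by simp
  show ?case
  proof (rule bexI[of _ a0], intro ballI impI)
    show "a0 \<in> S" using a0 by simp
    fix b assume b: "b \<in> S" and d: "\<exists>i<Suc n. b i \<noteq> a0 i"
    show "\<exists>j<Suc n. (\<forall>i. j<i \<and> i<Suc n \<longrightarrow> b i = a0 i) \<and> a0 j < b j"
    proof (cases "b n = s")
      case False
      have "s \<le> b n" unfolding s_def by (rule Least_le) (use b in blast)
      hence "a0 n < b n" using False a0n by simp
      thus ?thesis by (intro exI[of _ n]) auto
    next
      case True
      have "\<exists>i<n. b i \<noteq> a0 i" using d True a0n by (metis less_Suc_eq)
      then obtain j where j: "j<n" "\<forall>i. j<i \<and> i<n \<longrightarrow> b i = a0 i" "a0 j < b j"
        using H b True by blast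
      have "\<forall>i. j<i \<and> i<Suc n \<longrightarrow> b i = a0 i" using j(2) True a0n by (metis less_Suc_eq)
      thus ?thesis using j by (intro exI[of _ j]) auto
    qed
  qed
qed

lemma digits_lt:
  fixes B :: nat
  assumes B: "B \<ge> 1" and a: "\<forall>i<n. a i < B"
  shows "(\<Sum>i<n. a i * B^i) < B^n"
  using a
proof (induction n)
  case 0 thus ?case by simp
next
  case (Suc n)
  have IH: "(\<Sum>i<n. a i * B^i) < B^n" using Suc by simp
  have an: "a n + 1 \<le> B" using Suc.prems by (simp add: Suc_le_eq)
  have "(\<Sum>i<Suc n. a i * B^i) = (\<Sum>i<n. a i * B^i) + a n * B^n" by simp
  also have "\<dots> < B^n + a n * B^n" using IH by simp
  also have "\<dots> = (a n + 1) * B^n" by simp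
  also have "\<dots> \<le> B * B^n" using an by (rule mult_right_mono) simp
  finally show ?case by simp
qed

lemma weight_lt:
  fixes B :: nat
  assumes B: "B \<ge> 1" and a: "\<forall>i<n. a i < B" and j: "j < n"
    and eq: "\<forall>i. j<i \<and> i<n \<longrightarrow> b i = a i" and lt: "a j < b j"
  shows "(\<Sum>i<n. a i * B^i) < (\<Sum>i<n. b i * B^i)"
  using a j eq
proof (induction n)
  case 0 thus ?case by simp
next
  case (Suc n)
  show ?case
  proof (cases "j = n")
    case True
    have d: "(\<Sum>i<n. a i * B^i) < B^n" using digits_lt[OF B] Suc.prems(1) by simp
    have "(\<Sum>i<Suc n. a i * B^i) = (\<Sum>i<n. a i * B^i) + a n * B^n" by simp
    also have "\<dots> < B^n + a n * B^n" using d by simp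
    also have "\<dots> = (a n + 1) * B^n" by simp
    also have "\<dots> \<le> b n * B^n" using lt True by (intro mult_right_mono) simp_all
    also have "\<dots> \<le> (\<Sum>i<Suc n. b i * B^i)" by simp
    finally show ?thesis .
  next
    case False
    hence jn: "j < n" using Suc.prems(2) by simp
    have bn: "b n = a n" using Suc.prems(3) jn by simp
    have "(\<Sum>i<n. a i * B^i) < (\<Sum>i<n. b i * B^i)"
      using Suc.IH Suc.prems jn by simp
    thus ?thesis using bn by simp
  qed
qed

lemma exists_nonzero:
  assumes p: "prime p" and f: "f \<in> fpQ p n" and nz: "f \<noteq> (\<lambda>k x. 0)"
  shows "\<exists>\<alpha>. (\<forall>i\<ge>n. \<alpha> i = 0) \<and> cinf p n f \<alpha> \<noteq> 0"
proof -
  have p0: "p > 0" using p by (simp add: prime_gt_0_int)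
  obtain k x0 where fx0: "f k x0 \<noteq> 0" using nz by (metis ext)
  have x0l: "x0 \<in> lvl p n k" using f fx0 unfolding fpQ_def by blast
  define X where "X = {x\<in>lvl p n k. f k x \<noteq> 0}"
  have finX: "finite X" unfolding X_def using lvl_finite by simp
  have x0X: "x0 \<in> X" unfolding X_def using x0l fx0 by simp
  define s where "s = (\<lambda>x::nat\<Rightarrow>int. \<Sum>i<n. x i)"
  have "Max (s ` X) \<in> s ` X" using finX x0X by (intro Max_in) auto
  then obtain xs where xsX: "xs \<in> X" and xsm: "s xs = Max (s ` X)" by auto
  have smax: "\<forall>x\<in>X. s x \<le> s xs" using finX xsm by simp
  have xsl: "xs \<in> lvl p n k" and fxs: "f k xs \<noteq> 0" using xsX by (auto simp: X_def)
  define \<alpha> where "\<alpha> = (\<lambda>i. nat (xs i))"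
  have az: "\<forall>i\<ge>n. \<alpha> i = 0" using xsl by (simp add: \<alpha>_def lvl_def)
  have al: "\<forall>i<n. \<alpha> i < nat p ^ k"
  proof (intro allI impI)
    fix i assume "i < n"
    hence "0 \<le> xs i" "xs i < p^k" using xsl by (auto simp: lvl_def)
    hence "nat (xs i) < nat (p^k)" by simp
    thus "\<alpha> i < nat p ^ k" using p0 by (simp add: \<alpha>_def nat_power_eq)
  qed
  have B1: "Bx n \<alpha> xs = 1" unfolding Bx_def \<alpha>_def by simp
  have B0: "f k x * Bx n \<alpha> x = 0" if xl: "x \<in> lvl p n k" and xne: "x \<noteq> xs" for x
  proof (rule ccontr)
    assume "f k x * Bx n \<alpha> x \<noteq> 0"
    hence fx: "f k x \<noteq> 0" and bx: "Bx n \<alpha> x \<noteq> 0" by auto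
    have xX: "x \<in> X" using xl fx by (simp add: X_def)
    have le: "xs i \<le> x i" if i: "i < n" for i
    proof -
      have "int (nat (x i) choose \<alpha> i) \<noteq> 0" using bx i unfolding Bx_def by auto
      hence "\<not> nat (x i) < \<alpha> i" using binomial_eq_0 by fastforce
      moreover have "0 \<le> xs i" "0 \<le> x i" using xsl xl i by (auto simp: lvl_def)
      ultimately show ?thesis by (auto simp: \<alpha>_def)
    qed
    have "\<forall>i<n. x i = xs i"
    proof (rule ccontr)
      assume "\<not> (\<forall>i<n. x i = xs i)"
      then obtain i where i: "i < n" "x i \<noteq> xs i" by auto
      have "s xs < s x" unfolding s_def
      proof (rule sum_strict_mono_ex1)
        show "\<forall>j\<in>{..<n}. xs j \<le> x j" using le by simp
        have "xs i < x i" using le[OF i(1)] i(2) by simp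
        thus "\<exists>j\<in>{..<n}. xs j < x j" using i(1) by blast
      qed simp
      thus False using smax xX by force
    qed
    moreover have "\<forall>i\<ge>n. x i = xs i" using xl xsl by (simp add: lvl_def)
    ultimately have "x = xs" by (metis ext not_le)
    thus False using xne by simp
  qed
  have "(\<Sum>x\<in>lvl p n k. f k x * Bx n \<alpha> x) = (\<Sum>x\<in>{xs}. f k x * Bx n \<alpha> x)"
    by (rule sum.mono_neutral_right) (use lvl_finite xsl B0 in auto)
  also have "\<dots> = f k xs" using B1 by simp
  finally have "cc p n f k \<alpha> = f k xs mod p" unfolding cc_def by simp
  also have "\<dots> = f k xs"
  proof -
    have "0 \<le> f k xs \<and> f k xs < p" using f xsl unfolding fpQ_def by blast
    thus ?thesis by (intro mod_pos_pos_trivial) auto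
  qed
  finally have "cc p n f k \<alpha> \<noteq> 0" using fxs by simp
  hence "cinf p n f \<alpha> \<noteq> 0" using cinf_eq[OF p f al] by simp
  thus ?thesis using az by blast
qed

lemma main_contra:
  assumes p: "prime p" and n: "n \<ge> 1" and fk: "\<forall>\<phi>\<in>epis p n. f \<in> ker_hat p n \<phi>"
    and nz: "f \<noteq> (\<lambda>k x. 0)"
  shows False
proof -
  have p0: "p > 0" using p by (simp add: prime_gt_0_int)
  define P where "P = nat p"
  have pP: "int P = p" using p0 by (simp add: P_def)
  have PP: "prime P" unfolding P_def using p prime_int_nat_transfer[of p] by blast
  have "nat 2 \<le> nat p" using prime_ge_2_int[OF p] by (rule nat_mono)
  hence P2: "P \<ge> 2" unfolding P_def by simp
  have f: "f \<in> fpQ p n" using fk phiM_epis[OF p n, of 0] by (auto simp: ker_hat_def)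
  define S where "S = {\<alpha>. (\<forall>i\<ge>n. \<alpha> i = 0) \<and> cinf p n f \<alpha> \<noteq> 0}"
  have "S \<noteq> {}" using exists_nonzero[OF p f nz] unfolding S_def by blast
  from lexmin[OF this, of n] obtain \<alpha>0 where a0S: "\<alpha>0 \<in> S" and
    L: "\<forall>b\<in>S. (\<exists>i<n. b i \<noteq> \<alpha>0 i) \<longrightarrow> (\<exists>j<n. (\<forall>i. j<i \<and> i<n \<longrightarrow> b i = \<alpha>0 i) \<and> \<alpha>0 j < b j)"
    by blast
  define M where "M = (\<Sum>i<n. \<alpha>0 i) + 1"
  define Bm where "Bm = P^M"
  have aB: "\<forall>i<n. \<alpha>0 i < Bm"
  proof (intro allI impI)
    fix i assume "i < n"
    hence "\<alpha>0 i \<le> (\<Sum>i<n. \<alpha>0 i)" by (intro member_le_sum) auto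
    also have "\<dots> < M" unfolding M_def by simp
    also have "\<dots> < P ^ M" using lt_pow[OF P2] .
    finally show "\<alpha>0 i < Bm" unfolding Bm_def .
  qed
  have Bm1: "Bm \<ge> 1" using P2 unfolding Bm_def by simp
  define e where "e = (\<lambda>i::nat. M*i)"
  have eB: "P^(e i) = Bm^i" for i unfolding e_def Bm_def by (simp add: power_mult)
  define N0 where "N0 = (\<Sum>i<n. \<alpha>0 i * P^(e i))"
  define K where "K = N0 + 1"
  have NK: "N0 < P^K"
  proof -
    have "N0 < K" unfolding K_def by simp
    also have "\<dots> < P^K" using lt_pow[OF P2] .
    finally show ?thesis .
  qed
  define \<phi> where "\<phi> = phiM p n M"
  have "f \<in> ker_hat p n \<phi>" using fk phiM_epis[OF p n, of M] unfolding \<phi>_def by blast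
  hence hz: "hat p n \<phi> f = (\<lambda>k y. 0)" by (simp add: ker_hat_def)
  define T where "T = Tset P e n N0"
  have finT: "finite T" unfolding T_def using Tset_finite P2 by simp
  have fib: "[(\<Sum>x\<in>{x\<in>lvl p n K. \<phi> K x = y}. f K x) = 0] (mod p)" if y: "y \<in> {0..<p^K}" for y
  proof -
    have "hat p n \<phi> f K y = 0" using hz by simp
    hence "(\<Sum>x\<in>{x\<in>lvl p n K. \<phi> K x = y}. f K x) mod p = 0" using y unfolding hat_def by simp
    thus ?thesis by (simp add: cong_def)
  qed
  have phir: "\<phi> K x \<in> {0..<p^K}" if "x \<in> lvl p n K" for x
    using that p0 by (simp add: \<phi>_def phiM_def)
  define Z where "Z = (\<Sum>x\<in>lvl p n K. f K x * int (nat (\<phi> K x) choose N0))"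
  have ca: "[Z = 0] (mod p)"
  proof -
    have "Z = (\<Sum>y\<in>{0..<p^K}. \<Sum>x\<in>{x\<in>lvl p n K. \<phi> K x = y}. f K x * int (nat (\<phi> K x) choose N0))"
      unfolding Z_def by (rule sum.group[symmetric]) (use lvl_finite phir in auto)
    also have "\<dots> = (\<Sum>y\<in>{0..<p^K}. (\<Sum>x\<in>{x\<in>lvl p n K. \<phi> K x = y}. f K x) * int (nat y choose N0))"
      by (rule sum.cong) (auto simp: sum_distrib_right)
    finally have Ze: "Z = \<dots>" .
    have "[(\<Sum>y\<in>{0..<p^K}. (\<Sum>x\<in>{x\<in>lvl p n K. \<phi> K x = y}. f K x) * int (nat y choose N0))
        = (\<Sum>y\<in>{0..<p^K}. 0 * int (nat y choose N0))] (mod p)"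
      by (intro cong_sum cong_mult cong_refl fib)
    thus ?thesis unfolding Ze by simp
  qed
  have cb: "[int (nat (\<phi> K x) choose N0) = (\<Sum>\<gamma>\<in>T. Bx n \<gamma> x)] (mod p)" if xl: "x \<in> lvl p n K" for x
  proof -
    define Sx where "Sx = (\<Sum>i<n. P^(e i) * nat (x i))"
    have xn: "\<forall>i<n. x i \<ge> 0" using xl by (simp add: lvl_def)
    have iS: "int Sx = (\<Sum>i<n. p^(M*i) * x i)"
      unfolding Sx_def of_nat_sum using xn pP by (intro sum.cong) (auto simp: e_def)
    have "\<phi> K x = (\<Sum>i<n. p^(M*i) * x i) mod p^K" using xl by (simp add: \<phi>_def phiM_def)
    also have "\<dots> = int (Sx mod P^K)" unfolding iS[symmetric] using pP by (simp add: of_nat_mod)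
    finally have "nat (\<phi> K x) = Sx mod P^K" by simp
    moreover have "[Sx mod P^K choose N0 = Sx choose N0] (mod P)"
    proof -
      have "[Sx mod P^K + P^K * (Sx div P^K) choose N0 = Sx mod P^K choose N0] (mod P)"
        by (rule B2[OF PP NK])
      thus ?thesis by (simp add: cong_sym_eq)
    qed
    moreover have "[Sx choose N0 = (\<Sum>\<gamma>\<in>T. \<Prod>i<n. nat (x i) choose \<gamma> i)] (mod P)"
      unfolding Sx_def T_def by (rule G[OF PP])
    ultimately have "[nat (\<phi> K x) choose N0 = (\<Sum>\<gamma>\<in>T. \<Prod>i<n. nat (x i) choose \<gamma> i)] (mod P)"
      using cong_trans by metis
    hence "[int (nat (\<phi> K x) choose N0) = int (\<Sum>\<gamma>\<in>T. \<Prod>i<n. nat (x i) choose \<gamma> i)] (mod int P)"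
      by (rule cong_int_iff[THEN iffD2])
    thus ?thesis unfolding pP Bx_def of_nat_sum of_nat_prod .
  qed
  have cc1: "[Z = (\<Sum>\<gamma>\<in>T. \<Sum>x\<in>lvl p n K. f K x * Bx n \<gamma> x)] (mod p)"
  proof -
    have "[Z = (\<Sum>x\<in>lvl p n K. f K x * (\<Sum>\<gamma>\<in>T. Bx n \<gamma> x))] (mod p)"
      unfolding Z_def by (intro cong_sum cong_mult cong_refl cb)
    also have "(\<Sum>x\<in>lvl p n K. f K x * (\<Sum>\<gamma>\<in>T. Bx n \<gamma> x)) = (\<Sum>\<gamma>\<in>T. \<Sum>x\<in>lvl p n K. f K x * Bx n \<gamma> x)"
      by (simp add: sum_distrib_left sum.swap[of _ T])
    finally show ?thesis .
  qed
  have Tle: "\<gamma> i \<le> N0" if "\<gamma> \<in> T" "i < n" for \<gamma> i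
  proof -
    have "\<gamma> i \<le> \<gamma> i * P^(e i)" using P2 by simp
    also have "\<dots> \<le> (\<Sum>i<n. \<gamma> i * P^(e i))" by (rule member_le_sum) (use that in auto)
    finally show ?thesis using that unfolding T_def Tset_def by simp
  qed
  have cd: "[(\<Sum>\<gamma>\<in>T. \<Sum>x\<in>lvl p n K. f K x * Bx n \<gamma> x) = (\<Sum>\<gamma>\<in>T. cinf p n f \<gamma>)] (mod p)"
  proof (rule cong_sum)
    fix \<gamma> assume g: "\<gamma> \<in> T"
    have "\<forall>i<n. \<gamma> i < nat p ^ K" using Tle[OF g] NK unfolding P_def by (meson le_less_trans)
    hence "cc p n f K \<gamma> = cinf p n f \<gamma>" by (rule cinf_eq[OF p f])
    moreover have "cinf p n f \<gamma> mod p = cinf p n f \<gamma>" unfolding cinf_def cc_def by simp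
    ultimately show "[(\<Sum>x\<in>lvl p n K. f K x * Bx n \<gamma> x) = cinf p n f \<gamma>] (mod p)"
      unfolding cc_def cong_def by simp
  qed
  have a0T: "\<alpha>0 \<in> T" using a0S unfolding T_def Tset_def S_def N0_def by simp
  have zero: "cinf p n f \<gamma> = 0" if g: "\<gamma> \<in> T - {\<alpha>0}" for \<gamma>
  proof (rule ccontr)
    assume c: "cinf p n f \<gamma> \<noteq> 0"
    have gz: "\<forall>i\<ge>n. \<gamma> i = 0" and gs: "(\<Sum>i<n. \<gamma> i * P^(e i)) = N0"
      using g unfolding T_def Tset_def by auto
    have gS: "\<gamma> \<in> S" unfolding S_def using gz c by simp
    show False
    proof (cases "\<exists>i<n. \<gamma> i \<noteq> \<alpha>0 i")
      case True
      then obtain j where j: "j<n" "\<forall>i. j<i \<and> i<n \<longrightarrow> \<gamma> i = \<alpha>0 i" "\<alpha>0 j < \<gamma> j"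
        using L gS by blast
      have "(\<Sum>i<n. \<alpha>0 i * Bm^i) < (\<Sum>i<n. \<gamma> i * Bm^i)"
        by (rule weight_lt[OF Bm1 aB j])
      thus False using gs unfolding N0_def eB by simp
    next
      case False
      have "\<forall>i\<ge>n. \<alpha>0 i = 0" using a0S unfolding S_def by simp
      hence "\<gamma> = \<alpha>0" using False gz by (metis ext not_le)
      thus False using g by simp
    qed
  qed
  have "(\<Sum>\<gamma>\<in>T. cinf p n f \<gamma>) = (\<Sum>\<gamma>\<in>{\<alpha>0}. cinf p n f \<gamma>)"
    by (rule sum.mono_neutral_right) (use finT a0T zero in auto)
  hence se: "(\<Sum>\<gamma>\<in>T. cinf p n f \<gamma>) = cinf p n f \<alpha>0" by simp
  have "[0 = cinf p n f \<alpha>0] (mod p)"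
    using cong_trans[OF cong_trans[OF cong_sym[OF ca] cc1] cd] unfolding se .
  hence "cinf p n f \<alpha>0 mod p = 0" by (simp add: cong_def)
  moreover have "cinf p n f \<alpha>0 mod p = cinf p n f \<alpha>0" unfolding cinf_def cc_def by simp
  moreover have "cinf p n f \<alpha>0 \<noteq> 0" using a0S unfolding S_def by simp
  ultimately show False by simp
qed

theorem lemma7p1:
  fixes p :: int and n :: nat
  assumes "prime p" and "n \<ge> 1"
  shows "(\<Inter>\<phi>\<in>epis p n. ker_hat p n \<phi>) = {(\<lambda>k x. 0)}"
proof
  show "{(\<lambda>k x. 0)} \<subseteq> (\<Inter>\<phi>\<in>epis p n. ker_hat p n \<phi>)"
    using zero_in[OF assms] by blast
  show "(\<Inter>\<phi>\<in>epis p n. ker_hat p n \<phi>) \<subseteq> {(\<lambda>k x. 0)}"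
  proof
    fix f assume "f \<in> (\<Inter>\<phi>\<in>epis p n. ker_hat p n \<phi>)"
    hence "\<forall>\<phi>\<in>epis p n. f \<in> ker_hat p n \<phi>" by blast
    hence "f = (\<lambda>k x. 0)" using main_contra[OF assms] by blast
    thus "f \<in> {(\<lambda>k x. 0)}" by simp
  qed
qed

end
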